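(* Let $\alpha\in\mathbb{C}^N$ and let $u$ be a holomorphic solution of the system $M_{p,q}(\alpha)u=0$ ($1\le p\ne q\le N$) on a domain $D\subset\{x\in\mathbb{C}^N:x_a\ne x_b\ \forall a\ne b\}$. Let $g=\begin{pmatrix}a&b\\c&d\end{pmatrix}\in SL(2,\mathbb{C})$, and let $D'$ be a simply connected domain on which $cx_k+d\ne0$ for all $k$ and $\big(\frac{ax_1+b}{cx_1+d},\dots,\frac{ax_N+b}{cx_N+d}\big)\in D$, with holomorphic branches of $(cx_k+d)^{\alpha_k}$ fixed on $D'$. Then $$\tilde u(x)=\prod_{k=1}^N(cx_k+d)^{\alpha_k}\;u\Big(\frac{ax_1+b}{cx_1+d},\dots,\frac{ax_N+b}{cx_N+d}\Big)$$ is again a solution of $M_{p,q}(\alpha)\tilde u=0$ for all $1\le p\ne q\le N$ on $D'$.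
   Context: $\partial_p=\partial/\partial x_p$; for $p\ne q$, $M_{p,q}(\alpha)=\partial_p\partial_q+\frac{\alpha_q}{x_p-x_q}\partial_p+\frac{\alpha_p}{x_q-x_p}\partial_q$. *)

theory Defs
  imports "HOL-Analysis.Analysis"
begin

text \<open>Points of C^N are modelled as complex ^ 'n with 'n a finite index type (N = CARD('n)).\<close>

definition cholomorphic_on :: "(complex ^ 'n \<Rightarrow> complex) \<Rightarrow> (complex ^ 'n) set \<Rightarrow> bool" where
  "cholomorphic_on f S \<longleftrightarrow>
     (\<forall>x\<in>S. \<exists>L. (f has_derivative L) (at x) \<and> (\<forall>(c::complex) v. L (c *s v) = c * L v))"

definition cupd :: "complex ^ 'n \<Rightarrow> 'n \<Rightarrow> complex \<Rightarrow> complex ^ 'n" where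
  "cupd x p t = (\<chi> i. if i = p then t else x $ i)"

definition cpartial :: "'n \<Rightarrow> (complex ^ 'n \<Rightarrow> complex) \<Rightarrow> complex ^ 'n \<Rightarrow> complex" where
  "cpartial p u x = deriv (\<lambda>t. u (cupd x p t)) (x $ p)"

definition Mop :: "complex ^ 'n \<Rightarrow> 'n \<Rightarrow> 'n \<Rightarrow> (complex ^ 'n \<Rightarrow> complex) \<Rightarrow> complex ^ 'n \<Rightarrow> complex" where
  "Mop \<alpha> p q u x =
     cpartial p (cpartial q u) x
     + (\<alpha> $ q / (x $ p - x $ q)) * cpartial p u x
     + (\<alpha> $ p / (x $ q - x $ p)) * cpartial q u x"

end

theory Submission imports Defs "HOL-Complex_Analysis.Complex_Analysis"
begin

lemma bounded_linear_vec_lambda: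
  fixes f' :: "'n::finite \<Rightarrow> 'a::real_normed_vector \<Rightarrow> 'b::real_normed_vector"
  assumes bl: "\<And>k. bounded_linear (f' k)"
  shows "bounded_linear (\<lambda>h. \<chi> k. f' k h)"
proof -
  have "\<forall>k. \<exists>K. \<forall>h. norm (f' k h) \<le> norm h * K"
    using bl bounded_linear.bounded by blast
  then obtain K where K: "\<And>k h. norm (f' k h) \<le> norm h * K k"
    by metis
  show ?thesis
  proof (rule bounded_linear_intro)
    show "(\<chi> k. f' k (x + y)) = (\<chi> k. f' k x) + (\<chi> k. f' k y)" for x y
      by (simp add: vec_eq_iff linear_add[OF bounded_linear.linear[OF bl]])
    show "(\<chi> k. f' k (r *\<^sub>R x)) = r *\<^sub>R (\<chi> k. f' k x)" for r x
      by (simp add: vec_eq_iff linear_scale[OF bounded_linear.linear[OF bl]])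
    show "norm (\<chi> k. f' k h) \<le> norm h * (\<Sum>k\<in>UNIV. K k)" for h
    proof -
      have "norm (\<chi> k. f' k h) \<le> (\<Sum>k\<in>UNIV. norm ((\<chi> k. f' k h) $ k))"
        unfolding norm_vec_def by (rule L2_set_le_sum) simp
      also have "\<dots> \<le> (\<Sum>k\<in>UNIV. norm h * K k)"
        by (intro sum_mono) (simp add: K)
      finally show ?thesis by (simp add: sum_distrib_left)
    qed
  qed
qed

lemma has_derivative_vec_lambda:
  fixes f :: "'n::finite \<Rightarrow> 'a::real_normed_vector \<Rightarrow> 'b::real_normed_vector"
  assumes "\<And>k. (f k has_derivative f' k) (at x within S)"
  shows "((\<lambda>y. \<chi> k. f k y) has_derivative (\<lambda>h. \<chi> k. f' k h)) (at x within S)"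
proof -
  have bl: "bounded_linear (\<lambda>h. \<chi> k. f' k h)"
    using assms has_derivative_bounded_linear by (intro bounded_linear_vec_lambda) blast
  have tl: "((\<lambda>y. (1 / norm (y - x)) *\<^sub>R ((\<chi> k. f k y) - ((\<chi> k. f k x) + (\<chi> k. f' k (y - x))))) \<longlongrightarrow> 0) (at x within S)"
  proof -
    have "((\<lambda>y. \<chi> k. (1 / norm (y - x)) *\<^sub>R (f k y - (f k x + f' k (y - x)))) \<longlongrightarrow> (\<chi> k. 0)) (at x within S)"
      using assms[unfolded has_derivative_within] by (intro tendsto_vec_lambda) blast
    moreover have "(\<chi> k. 0) = (0::'b^'n)" by (simp add: vec_eq_iff)
    moreover have "\<And>y. (1 / norm (y - x)) *\<^sub>R ((\<chi> k. f k y) - ((\<chi> k. f k x) + (\<chi> k. f' k (y - x)))) = (\<chi> k. (1 / norm (y - x)) *\<^sub>R (f k y - (f k x + f' k (y - x))))"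
      unfolding vec_eq_iff by simp
    ultimately show ?thesis
      by simp
  qed
  then show ?thesis unfolding has_derivative_within using bl by (intro conjI)
qed


lemma cupd_nth[simp]: "cupd x p t $ i = (if i = p then t else x $ i)"
  by (simp add: cupd_def)

lemma cupd_cupd_same[simp]: "cupd (cupd x p t) p s = cupd x p s"
  by (simp add: vec_eq_iff)

lemma cupd_same[simp]: "cupd x p (x $ p) = x"
  by (simp add: vec_eq_iff)

lemma cupd_has_derivative:
  "((\<lambda>t. cupd x p t) has_derivative (\<lambda>h. \<chi> i. if i = p then h else 0)) (at t within S)"
  unfolding cupd_def
proof (rule has_derivative_vec_lambda[where f="\<lambda>i t. if i = p then t else x $ i"])
  fix i
  show "((\<lambda>t. if i = p then t else x $ i) has_derivative (\<lambda>h. if i = p then h else 0)) (at t within S)"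
    by (cases "i = p") (simp_all add: has_derivative_ident has_derivative_const)
qed

lemma cupd_continuous_on: "continuous_on A (cupd x p)"
  by (metis continuous_at_imp_continuous_on cupd_has_derivative has_derivative_continuous)

lemma open_cupd_vimage: "open D \<Longrightarrow> open {t. cupd x p t \<in> D}"
  using open_vimage[OF _ cupd_continuous_on, of D x p]
  by (simp add: vimage_def)

lemma line_deriv:
  fixes f :: "complex^'n \<Rightarrow> complex"
  assumes "(f has_derivative L) (at x)" "\<forall>(c::complex) v. L (c *s v) = c * L v"
  shows "((\<lambda>t. f (cupd x p t)) has_field_derivative L (\<chi> i. if i = p then 1 else 0)) (at (x $ p))"
proof -
  define e where "e = (\<chi> i. if i = p then 1 else (0::complex))"
  have "(f has_derivative L) (at (cupd x p (x $ p)))" using assms by simp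
  then have "((\<lambda>t. f (cupd x p t)) has_derivative (\<lambda>h. L (\<chi> i. if i = p then h else 0))) (at (x$p))"
    using has_derivative_compose[OF cupd_has_derivative] by blast
  moreover have "L (\<chi> i. if i = p then h else 0) = L e * h" for h
  proof -
    have "(\<chi> i. if i = p then h else 0) = h *s e"
      by (simp add: e_def vec_eq_iff)
    then show ?thesis using assms(2) by (simp add: mult.commute)
  qed
  ultimately have "((\<lambda>t. f (cupd x p t)) has_derivative (\<lambda>h. L e * h)) (at (x$p))"
    by simp
  then show ?thesis
    unfolding has_field_derivative_def e_def by simp
qed

lemma chol_line:
  assumes "cholomorphic_on f S" "x \<in> S"
  shows "((\<lambda>t. f (cupd x p t)) has_field_derivative cpartial p f x) (at (x $ p))"
proof -
  obtain L where L: "(f has_derivative L) (at x)" "\<forall>(c::complex) v. L (c *s v) = c * L v"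
    using assms unfolding cholomorphic_on_def by blast
  have d: "((\<lambda>t. f (cupd x p t)) has_field_derivative L (\<chi> i. if i = p then 1 else 0)) (at (x $ p))"
    by (rule line_deriv[OF L])
  then have "cpartial p f x = L (\<chi> i. if i = p then 1 else 0)"
    unfolding cpartial_def by (rule DERIV_imp_deriv)
  with d show ?thesis by simp
qed

lemma chol_line':
  assumes "cholomorphic_on f S" "cupd x p t \<in> S"
  shows "((\<lambda>s. f (cupd x p s)) has_field_derivative cpartial p f (cupd x p t)) (at t)"
  using chol_line[OF assms, of p] by simp

lemma chol_line_holo:
  assumes "open S" "cholomorphic_on f S"
  shows "(\<lambda>s. f (cupd x p s)) holomorphic_on {t. cupd x p t \<in> S}"
  using chol_line'[OF assms(2)] open_cupd_vimage[OF assms(1)]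
  by (subst holomorphic_on_open) auto

lemma chol_continuous:
  assumes "cholomorphic_on f S"
  shows "continuous_on S f"
proof (rule continuous_at_imp_continuous_on, rule ballI)
  fix x assume "x \<in> S"
  then obtain L where "(f has_derivative L) (at x)"
    using assms unfolding cholomorphic_on_def by blast
  then show "isCont f x" by (rule has_derivative_continuous)
qed

lemma cpartial_eqI:
  "((\<lambda>t. f (cupd x p t)) has_field_derivative D) (at (x $ p)) \<Longrightarrow> cpartial p f x = D"
  unfolding cpartial_def by (rule DERIV_imp_deriv)

lemma deriv_quot_bound:
  fixes g :: "complex \<Rightarrow> complex"
  assumes hol: "g holomorphic_on ball t0 (2*\<rho>)" and cont: "continuous_on (cball t0 (2*\<rho>)) g"
    and bnd: "\<And>t. t \<in> cball t0 (2*\<rho>) \<Longrightarrow> norm (g t) \<le> M"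
    and rho: "\<rho> > 0" and k: "norm k < \<rho>"
  shows "norm (g (t0 + k) - g t0 - deriv g t0 * k) \<le> 2*(M+1)/\<rho>^2 * norm k * norm k"
proof -
  define B2 where "B2 = 2*(M+1)/\<rho>^2"
  have M0: "M \<ge> 0"
    using bnd[of t0] rho by (metis centre_in_cball mult_pos_pos norm_ge_zero order_trans less_eq_real_def zero_less_numeral)
  then have B2: "B2 \<ge> 0" using rho by (simp add: B2_def)
  have d2: "norm (deriv (deriv g) w) \<le> B2" if w: "w \<in> ball t0 \<rho>" for w
  proof -
    have sub1: "ball w \<rho> \<subseteq> ball t0 (2*\<rho>)"
    proof
      fix v assume "v \<in> ball w \<rho>"
      moreover have "dist t0 v \<le> dist t0 w + dist w v" by (rule dist_triangle)
      ultimately show "v \<in> ball t0 (2*\<rho>)" using w by simp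
    qed
    have sub2: "cball w \<rho> \<subseteq> cball t0 (2*\<rho>)"
    proof
      fix v assume "v \<in> cball w \<rho>"
      moreover have "dist t0 v \<le> dist t0 w + dist w v" by (rule dist_triangle)
      ultimately show "v \<in> cball t0 (2*\<rho>)" using w by simp
    qed
    have "norm ((deriv ^^ 2) g w) \<le> fact 2 * (M+1) / \<rho>^2"
    proof (rule Cauchy_higher_deriv_bound[where y=0])
      show "g holomorphic_on ball w \<rho>" by (rule holomorphic_on_subset[OF hol sub1])
      show "continuous_on (cball w \<rho>) g" by (rule continuous_on_subset[OF cont sub2])
      show "g v \<in> ball 0 (M + 1)" if "v \<in> ball w \<rho>" for v
        using bnd[of v] sub1 that by auto
    qed (use rho in auto)
    then show ?thesis by (simp add: B2_def numeral_2_eq_2)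
  qed
  have holg': "deriv g holomorphic_on ball t0 (2*\<rho>)"
    by (rule holomorphic_deriv[OF hol open_ball])
  have inball: "w \<in> ball t0 (2*\<rho>)" if "w \<in> ball t0 \<rho>" for w
    using that rho by auto
  have hd: "(deriv g has_field_derivative deriv (deriv g) w) (at w within S)" if "w \<in> ball t0 \<rho>" for w S
    by (rule holomorphic_derivI[OF holg' open_ball inball[OF that]])
  have hg: "(g has_field_derivative deriv g w) (at w within S)" if "w \<in> ball t0 \<rho>" for w S
    by (rule holomorphic_derivI[OF hol open_ball inball[OF that]])
  have d1: "norm (deriv g w - deriv g t0) \<le> B2 * norm (w - t0)" if "w \<in> ball t0 \<rho>" for w
    using field_differentiable_bound[OF convex_ball, of t0 \<rho> "deriv g" "deriv (deriv g)" B2 w t0] hd d2 that rho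
    by auto
  define \<phi> where "\<phi> t = g t - g t0 - deriv g t0 * (t - t0)" for t
  have sub3: "cball t0 (norm k) \<subseteq> ball t0 \<rho>"
    using k by auto
  have "norm (\<phi> (t0+k) - \<phi> t0) \<le> (B2 * norm k) * norm (t0 + k - t0)"
  proof (rule field_differentiable_bound[OF convex_cball, of t0 "norm k" \<phi> "\<lambda>w. deriv g w - deriv g t0"])
    fix z assume z: "z \<in> cball t0 (norm k)"
    then have zb: "z \<in> ball t0 \<rho>" using sub3 by auto
    show "(\<phi> has_field_derivative deriv g z - deriv g t0) (at z within cball t0 (norm k))"
      unfolding \<phi>_def
      by (rule derivative_eq_intros hg[OF zb] refl)+ simp
    have "norm (deriv g z - deriv g t0) \<le> B2 * norm (z - t0)" by (rule d1[OF zb])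
    also have "\<dots> \<le> B2 * norm k"
      using z B2 by (intro mult_left_mono) (auto simp: dist_norm norm_minus_commute)
    finally show "norm (deriv g z - deriv g t0) \<le> B2 * norm k" .
  qed (auto simp: dist_norm)
  then show ?thesis by (simp add: \<phi>_def B2_def)
qed


lemma sep_hol:
  fixes F :: "complex \<Rightarrow> complex \<Rightarrow> complex"
  assumes R: "R > 0"
    and cont: "continuous_on (cball s0 R \<times> cball t0 R) (\<lambda>z. F (fst z) (snd z))"
    and h1: "\<And>t. t \<in> cball t0 R \<Longrightarrow> (\<lambda>s. F s t) holomorphic_on ball s0 R"
    and h2: "\<And>s. s \<in> cball s0 R \<Longrightarrow> F s holomorphic_on ball t0 R"
  shows "(\<lambda>s. deriv (F s) t0) holomorphic_on ball s0 R"
proof -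
  have "compact ((\<lambda>z. F (fst z) (snd z)) ` (cball s0 R \<times> cball t0 R))"
    by (intro compact_continuous_image cont compact_Times compact_cball)
  then obtain M where M0: "\<forall>y \<in> (\<lambda>z. F (fst z) (snd z)) ` (cball s0 R \<times> cball t0 R). norm y \<le> M"
    using compact_imp_bounded bounded_iff by metis
  have M: "norm (F s t) \<le> M" if "s \<in> cball s0 R" "t \<in> cball t0 R" for s t
    using M0 that by force
  have contF: "continuous_on (cball t0 R) (F s)" if "s \<in> cball s0 R" for s
  proof -
    have "continuous_on (cball t0 R) (\<lambda>t. (\<lambda>z. F (fst z) (snd z)) (s, t))"
      by (rule continuous_on_compose2[OF cont]) (use that in \<open>auto intro!: continuous_intros\<close>)
    then show ?thesis by simp
  qed
  have contS: "continuous_on (cball s0 R) (\<lambda>s. F s t)" if "t \<in> cball t0 R" for t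
  proof -
    have "continuous_on (cball s0 R) (\<lambda>s. (\<lambda>z. F (fst z) (snd z)) (s, t))"
      by (rule continuous_on_compose2[OF cont]) (use that in \<open>auto intro!: continuous_intros\<close>)
    then show ?thesis by simp
  qed
  define \<rho> where "\<rho> = R/2"
  have rho: "\<rho> > 0" "2*\<rho> = R" using R by (auto simp: \<rho>_def)
  define B2 where "B2 = 2*(M+1)/\<rho>^2"
  have M0: "M \<ge> 0" using M[of s0 t0] R by (metis centre_in_cball less_eq_real_def norm_ge_zero order_trans)
  then have B2: "B2 > 0" using rho by (simp add: B2_def)
  define D where "D k s = (F s (t0 + k) - F s t0) / k" for k s
  have ul: "uniform_limit (cball s0 R) D (\<lambda>s. deriv (F s) t0) (at 0)"
    unfolding uniform_limit_iff
  proof (intro allI impI)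
    fix e :: real assume e: "e > 0"
    show "\<forall>\<^sub>F k in at 0. \<forall>s\<in>cball s0 R. dist (D k s) (deriv (F s) t0) < e"
      unfolding eventually_at
    proof (intro exI[of _ "min \<rho> (e / B2)"] conjI ballI allI impI)
      show "min \<rho> (e / B2) > 0" using rho e B2 by simp
      fix k :: complex and s assume k: "k \<noteq> 0 \<and> dist k 0 < min \<rho> (e / B2)" and s: "s \<in> cball s0 R"
      have nk: "norm k < \<rho>" "norm k < e / B2" "norm k > 0" using k by auto
      have bnd: "norm (F s (t0 + k) - F s t0 - deriv (F s) t0 * k) \<le> B2 * norm k * norm k"
        unfolding B2_def
      proof (rule deriv_quot_bound)
        show "F s holomorphic_on ball t0 (2 * \<rho>)" using h2[OF s] rho by simp
        show "continuous_on (cball t0 (2 * \<rho>)) (F s)" using contF[OF s] rho by simp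
        show "norm (F s t) \<le> M" if "t \<in> cball t0 (2 * \<rho>)" for t using M[OF s] that rho by simp
      qed (use nk rho in auto)
      have "D k s - deriv (F s) t0 = (F s (t0 + k) - F s t0 - deriv (F s) t0 * k) / k"
        using k by (simp add: D_def field_simps)
      then have "dist (D k s) (deriv (F s) t0) = norm (F s (t0 + k) - F s t0 - deriv (F s) t0 * k) / norm k"
        by (simp add: dist_norm norm_divide)
      also have "\<dots> \<le> B2 * norm k * norm k / norm k"
        using bnd nk by (intro divide_right_mono) auto
      also have "\<dots> = B2 * norm k" using nk by simp
      also have "\<dots> < B2 * (e / B2)" using nk B2 by (intro mult_strict_left_mono) auto
      also have "\<dots> = e" using B2 by simp
      finally show "dist (D k s) (deriv (F s) t0) < e" .
    qed
  qed
  have evk: "continuous_on (cball s0 R) (D k) \<and> D k holomorphic_on ball s0 R"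
    if k: "k \<noteq> 0" "norm k < R" for k :: complex
  proof
    have tk: "t0 + k \<in> cball t0 R" "t0 \<in> cball t0 R" using R k by (auto simp: dist_norm)
    show "continuous_on (cball s0 R) (D k)"
      unfolding D_def by (intro continuous_intros contS tk) (use k in auto)
    show "D k holomorphic_on ball s0 R"
      unfolding D_def by (intro holomorphic_intros h1 tk) (use k in auto)
  qed
  have ev: "\<forall>\<^sub>F k in at 0. continuous_on (cball s0 R) (D k) \<and> D k holomorphic_on ball s0 R"
    unfolding eventually_at using R evk by (intro exI[of _ R]) auto
  show ?thesis
    by (rule holomorphic_uniform_limit[OF ev ul]) auto
qed


lemma norm_axis_le: "norm (axis i x) \<le> norm (x::'a::real_normed_vector)"
proof -
  have "norm (axis i x) \<le> (\<Sum>j\<in>UNIV. norm (axis i x $ j))"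
    unfolding norm_vec_def by (rule L2_set_le_sum) simp
  also have "\<dots> = (\<Sum>j\<in>UNIV. if j = i then norm x else 0)"
    by (intro sum.cong) (auto simp: axis_def)
  also have "\<dots> = norm x" by simp
  finally show ?thesis .
qed

lemma cupd_comm: "p \<noteq> q \<Longrightarrow> cupd (cupd z p s) q t = cupd (cupd z q t) p s"
  by (auto simp: vec_eq_iff)

lemma second_partial:
  assumes S: "open S" and u: "cholomorphic_on u S" and z: "z \<in> S" and pq: "p \<noteq> q"
  shows "((\<lambda>s. cpartial q u (cupd z p s)) has_field_derivative cpartial p (cpartial q u) z) (at (z $ p))"
proof -
  obtain \<epsilon> where \<epsilon>: "\<epsilon> > 0" "ball z \<epsilon> \<subseteq> S" using S z open_contains_ball by blast
  define R where "R = \<epsilon>/3"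
  have R: "R > 0" using \<epsilon> by (simp add: R_def)
  define F where "F s t = u (cupd (cupd z p s) q t)" for s t
  have inS: "cupd (cupd z p s) q t \<in> S" if "s \<in> cball (z$p) R" "t \<in> cball (z$q) R" for s t
  proof -
    have eq: "cupd (cupd z p s) q t - z = axis p (s - z$p) + axis q (t - z$q)"
      using pq by (auto simp: vec_eq_iff axis_def)
    have "norm (cupd (cupd z p s) q t - z) \<le> norm (s - z$p) + norm (t - z$q)"
      unfolding eq by (rule order_trans[OF norm_triangle_ineq add_mono[OF norm_axis_le norm_axis_le]])
    also have "\<dots> \<le> R + R" using that by (intro add_mono) (auto simp: dist_norm norm_minus_commute)
    also have "\<dots> < \<epsilon>" using \<epsilon> by (simp add: R_def)
    finally have "cupd (cupd z p s) q t \<in> ball z \<epsilon>" by (simp add: dist_norm norm_minus_commute)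
    with \<epsilon> show ?thesis by blast
  qed
  have cont: "continuous_on (cball (z$p) R \<times> cball (z$q) R) (\<lambda>w. F (fst w) (snd w))"
  proof -
    have m: "(\<lambda>w. cupd (cupd z p (fst w)) q (snd w)) = (\<lambda>w. \<chi> i. if i = q then snd w else if i = p then fst w else z $ i)"
      by (auto simp: fun_eq_iff vec_eq_iff)
    have "continuous_on (cball (z$p) R \<times> cball (z$q) R) (\<lambda>w. cupd (cupd z p (fst w)) q (snd w))"
      unfolding m
    proof (intro continuous_on_vec_lambda)
      fix i
      show "continuous_on (cball (z$p) R \<times> cball (z$q) R) (\<lambda>w. if i = q then snd w else if i = p then fst w else z $ i)"
        by (cases "i = q"; cases "i = p") (auto intro!: continuous_intros)
    qed
    moreover have "(\<lambda>w. cupd (cupd z p (fst w)) q (snd w)) ` (cball (z$p) R \<times> cball (z$q) R) \<subseteq> S"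
      using inS by (auto simp: mem_Times_iff)
    ultimately show ?thesis unfolding F_def
      by (rule continuous_on_compose2[OF chol_continuous[OF u]])
  qed
  have h1: "(\<lambda>s. F s t) holomorphic_on ball (z$p) R" if t: "t \<in> cball (z$q) R" for t
  proof -
    have "(\<lambda>s. u (cupd (cupd z q t) p s)) holomorphic_on {s. cupd (cupd z q t) p s \<in> S}"
      by (rule chol_line_holo[OF S u])
    moreover have "ball (z$p) R \<subseteq> {s. cupd (cupd z q t) p s \<in> S}"
      using inS[OF _ t] pq by (auto simp: cupd_comm)
    ultimately have "(\<lambda>s. u (cupd (cupd z q t) p s)) holomorphic_on ball (z$p) R"
      by (rule holomorphic_on_subset)
    then show ?thesis unfolding F_def using pq by (simp add: cupd_comm)
  qed
  have h2: "F s holomorphic_on ball (z$q) R" if s: "s \<in> cball (z$p) R" for s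
  proof -
    have "(\<lambda>t. u (cupd (cupd z p s) q t)) holomorphic_on {t. cupd (cupd z p s) q t \<in> S}"
      by (rule chol_line_holo[OF S u])
    moreover have "ball (z$q) R \<subseteq> {t. cupd (cupd z p s) q t \<in> S}"
      using inS[OF s] by auto
    ultimately have "(\<lambda>t. u (cupd (cupd z p s) q t)) holomorphic_on ball (z$q) R"
      by (rule holomorphic_on_subset)
    then show ?thesis unfolding F_def by simp
  qed
  have hol: "(\<lambda>s. deriv (F s) (z$q)) holomorphic_on ball (z$p) R"
    by (rule sep_hol[OF R cont h1 h2])
  have qp: "q \<noteq> p" using pq by simp
  have eq: "(\<lambda>s. cpartial q u (cupd z p s)) = (\<lambda>s. deriv (F s) (z$q))"
    unfolding cpartial_def F_def using pq qp by (simp add: fun_eq_iff)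
  have "(\<lambda>s. deriv (F s) (z$q)) field_differentiable at (z$p)"
    using holomorphic_on_imp_differentiable_at[OF hol open_ball] R by simp
  then obtain D where D: "((\<lambda>s. cpartial q u (cupd z p s)) has_field_derivative D) (at (z$p))"
    unfolding eq field_differentiable_def by blast
  then have "cpartial p (cpartial q u) z = D"
    by (rule cpartial_eqI)
  with D show ?thesis by simp
qed

lemma alg:
  fixes a b c d xp xq E u cp cq cpq ap aq :: complex
  assumes wp: "c*xp+d \<noteq> 0" and wq: "c*xq+d \<noteq> 0" and x: "xp \<noteq> xq" and SL2: "a*d-b*c = 1"
  shows "E * (ap * c / (c*xp+d)) * (aq * c / (c*xq+d) * u + cq / (c*xq+d)^2)
         + (aq * c / (c*xq+d) * (cp * (1 / (c*xp+d)^2)) + cpq * (1/(c*xp+d)^2) / (c*xq+d)^2) * E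
         + aq / (xp - xq) * (E * (ap * c / (c*xp+d) * u + cp / (c*xp+d)^2))
         + ap / (xq - xp) * (E * (aq * c / (c*xq+d) * u + cq / (c*xq+d)^2))
       = E / ((c*xp+d)^2 * (c*xq+d)^2) *
         (cpq + aq / ((a*xp+b)/(c*xp+d) - (a*xq+b)/(c*xq+d)) * cp
              + ap / ((a*xq+b)/(c*xq+d) - (a*xp+b)/(c*xp+d)) * cq)"
proof -
  have k: "(a*xp+b)*(c*xq+d) - (a*xq+b)*(c*xp+d) = xp - xq"
  proof -
    have "(a*xp+b)*(c*xq+d) - (a*xq+b)*(c*xp+d) = (a*d-b*c)*(xp-xq)" by (simp add: algebra_simps)
    then show ?thesis using SL2 by simp
  qed
  have e1: "(a*xp+b)/(c*xp+d) - (a*xq+b)/(c*xq+d) = (xp - xq)/((c*xp+d)*(c*xq+d))"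
    using wp wq k by (simp add: diff_frac_eq)
  have e2: "(a*xq+b)/(c*xq+d) - (a*xp+b)/(c*xp+d) = (xq - xp)/((c*xp+d)*(c*xq+d))"
    using e1 by (metis minus_diff_eq minus_divide_left)
  have x1: "xp - xq \<noteq> 0" "xq - xp \<noteq> 0" using x by auto
  define A where "A = inverse (c*xp+d)"
  define B where "B = inverse (c*xq+d)"
  define X where "X = inverse (xp - xq)"
  have hA: "A * (c*xp+d) = 1" using wp by (simp add: A_def)
  have hB: "B * (c*xq+d) = 1" using wq by (simp add: B_def)
  have hX: "X * (xp - xq) = 1" using x1 by (simp add: X_def)
  have iA: "inverse A = c*xp+d" by (simp add: A_def)
  have iB: "inverse B = c*xq+d" by (simp add: B_def)
  have iX: "inverse (xq - xp) = - X" by (simp add: X_def inverse_minus_eq[symmetric])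
  show ?thesis
    unfolding e1 e2 unfolding divide_inverse inverse_mult_distrib power_inverse[symmetric] inverse_inverse_eq
      A_def[symmetric] B_def[symmetric] X_def[symmetric] iX mult_1_left
    unfolding iA iB
    using hA hB hX by algebra
qed


theorem mainTheorem9:
  fixes \<alpha> :: "complex ^ 'n"
    and u :: "complex ^ 'n \<Rightarrow> complex"
    and D D' :: "(complex ^ 'n) set"
    and a b c d :: complex
    and lg :: "'n \<Rightarrow> complex ^ 'n \<Rightarrow> complex"
  assumes D_dom: "open D" "connected D" "D \<noteq> {}"
    and D_sub: "D \<subseteq> {x. \<forall>i j. i \<noteq> j \<longrightarrow> x $ i \<noteq> x $ j}"
    and u_hol: "cholomorphic_on u D"
    and u_sol: "\<forall>p q. p \<noteq> q \<longrightarrow> (\<forall>x\<in>D. Mop \<alpha> p q u x = 0)"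
    and SL2: "a * d - b * c = 1"
    and D'_dom: "open D'" "connected D'" "D' \<noteq> {}" "simply_connected D'"
    and D'_nz: "\<forall>x\<in>D'. \<forall>k. c * x $ k + d \<noteq> 0"
    and D'_map: "\<forall>x\<in>D'. (\<chi> k. (a * x $ k + b) / (c * x $ k + d)) \<in> D"
    and lg_hol: "\<forall>k. cholomorphic_on (lg k) D'"
    and lg_branch: "\<forall>k. \<forall>x\<in>D'. exp (lg k x) = c * x $ k + d"
  shows "cholomorphic_on
           (\<lambda>x. (\<Prod>k\<in>UNIV. exp (\<alpha> $ k * lg k x)) * u (\<chi> k. (a * x $ k + b) / (c * x $ k + d))) D'
       \<and> (\<forall>p q. p \<noteq> q \<longrightarrow> (\<forall>x\<in>D'.
            Mop \<alpha> p q (\<lambda>x. (\<Prod>k\<in>UNIV. exp (\<alpha> $ k * lg k x)) * u (\<chi> k. (a * x $ k + b) / (c * x $ k + d))) x = 0))"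
proof -
  define Y where "Y x = (\<chi> k. (a * x $ k + b) / (c * x $ k + d))" for x :: "complex^'n"
  define m where "m t = (a * t + b) / (c * t + d)" for t :: complex
  define E where "E x = (\<Prod>k\<in>UNIV. exp (\<alpha> $ k * lg k x))" for x :: "complex^'n"
  define U where "U x = E x * u (Y x)" for x :: "complex^'n"
  have U_eq: "(\<lambda>x. (\<Prod>k\<in>UNIV. exp (\<alpha> $ k * lg k x)) * u (\<chi> k. (a * x $ k + b) / (c * x $ k + d))) = U"
    by (simp add: fun_eq_iff U_def E_def Y_def)
  have YD: "Y x \<in> D" if "x \<in> D'" for x :: "complex^'n" using D'_map that by (simp add: Y_def)
  have nz: "c * x $ k + d \<noteq> 0" if "x \<in> D'" for x :: "complex^'n" and k using D'_nz that by blast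
  have Ycupd: "Y (cupd x p t) = cupd (Y x) p (m t)" for x :: "complex^'n" and p t
    by (simp add: Y_def m_def vec_eq_iff)
  have Yp: "Y x $ p = m (x $ p)" for x :: "complex^'n" and p by (simp add: Y_def m_def)
  have dm: "(m has_field_derivative 1 / (c * t + d)^2) (at t)" if t: "c * t + d \<noteq> 0" for t
  proof -
    have f1: "((\<lambda>t. a*t+b) has_field_derivative a) (at t)" by (auto intro!: derivative_eq_intros)
    have g1: "((\<lambda>t. c*t+d) has_field_derivative c) (at t)" by (auto intro!: derivative_eq_intros)
    have "(m has_field_derivative (a * (c*t+d) - (a*t+b) * c) / ((c*t+d) * (c*t+d))) (at t)"
      unfolding m_def by (rule DERIV_divide[OF f1 g1 t])
    moreover have "a * (c*t+d) - (a*t+b) * c = 1" using SL2 by (simp add: algebra_simps)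
    ultimately show ?thesis by (simp add: power2_eq_square)
  qed
  have dlg: "((\<lambda>t. lg k (cupd x p t)) has_field_derivative (if k = p then c / (c * x$p + d) else 0)) (at (x$p))"
    if x: "x \<in> D'" for x :: "complex^'n" and k p
  proof -
    let ?l = "cpartial p (lg k) x"
    have d1: "((\<lambda>t. lg k (cupd x p t)) has_field_derivative ?l) (at (x$p))"
      using chol_line lg_hol x by blast
    have d2: "((\<lambda>t. exp (lg k (cupd x p t))) has_field_derivative exp (lg k x) * ?l) (at (x$p))"
      using DERIV_chain2[OF DERIV_exp d1] by simp
    define T where "T = {t. cupd x p t \<in> D'}"
    have T: "open T" "x$p \<in> T" using open_cupd_vimage[OF D'_dom(1)] x by (auto simp: T_def)
    have d3: "((\<lambda>t. c * (cupd x p t) $ k + d) has_field_derivative exp (lg k x) * ?l) (at (x$p))"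
      by (rule has_field_derivative_transform_within_open[OF d2 T]) (use lg_branch in \<open>auto simp: T_def\<close>)
    have fe: "(\<lambda>t. c * (cupd x p t) $ k + d) = (if k = p then (\<lambda>t. c*t+d) else (\<lambda>t. c * x$k + d))"
      by (auto simp: fun_eq_iff)
    have d4: "((\<lambda>t. c * (cupd x p t) $ k + d) has_field_derivative (if k = p then c else 0)) (at (x$p))"
      unfolding fe by (cases "k = p") (auto intro!: derivative_eq_intros)
    have "exp (lg k x) * ?l = (if k = p then c else 0)" by (rule DERIV_unique[OF d3 d4])
    moreover have "exp (lg k x) = c * x$k + d" using lg_branch x by blast
    ultimately have "(c * x$k + d) * ?l = (if k = p then c else 0)" by simp
    then have "?l = (if k = p then c else 0) / (c * x$k + d)"
      using nz[OF x, of k] by (simp add: eq_divide_eq mult.commute)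
    then have "?l = (if k = p then c / (c*x$p+d) else 0)"
      by (cases "k = p") auto
    with d1 show ?thesis by simp
  qed
  have Eexp: "E y = exp (\<Sum>k\<in>UNIV. \<alpha>$k * lg k y)" for y :: "complex^'n" by (simp add: E_def exp_sum)
  have dE: "((\<lambda>t. E (cupd x p t)) has_field_derivative E x * (\<alpha>$p * c / (c*x$p+d))) (at (x$p))"
    if x: "x \<in> D'" for x :: "complex^'n" and p
  proof -
    have ds: "((\<lambda>t. \<Sum>k\<in>UNIV. \<alpha>$k * lg k (cupd x p t)) has_field_derivative
               (\<Sum>k\<in>UNIV. \<alpha>$k * (if k = p then c/(c*x$p+d) else 0))) (at (x$p))"
      by (intro DERIV_sum DERIV_cmult dlg[OF x])
    have "(\<Sum>k\<in>UNIV. \<alpha>$k * (if k = p then c/(c*x$p+d) else 0)) = (\<Sum>k\<in>UNIV. if k = p then \<alpha>$k * (c/(c*x$p+d)) else 0)"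
      by (intro sum.cong) auto
    also have "\<dots> = \<alpha>$p * c / (c*x$p+d)" by simp
    finally have ds': "((\<lambda>t. \<Sum>k\<in>UNIV. \<alpha>$k * lg k (cupd x p t)) has_field_derivative \<alpha>$p * c / (c*x$p+d)) (at (x$p))"
      using ds by simp
    show ?thesis
      using DERIV_chain2[OF DERIV_exp ds'] unfolding Eexp by simp
  qed
  have dUY: "((\<lambda>t. u (Y (cupd x p t))) has_field_derivative cpartial p u (Y x) * (1 / (c*x$p+d)^2)) (at (x$p))"
    if x: "x \<in> D'" for x :: "complex^'n" and p
  proof -
    have "((\<lambda>s. u (cupd (Y x) p s)) has_field_derivative cpartial p u (Y x)) (at (Y x $ p))"
      by (rule chol_line[OF u_hol YD[OF x]])
    then have "((\<lambda>s. u (cupd (Y x) p s)) has_field_derivative cpartial p u (Y x)) (at (m (x $ p)))"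
      by (simp add: Yp)
    from DERIV_chain2[OF this dm[OF nz[OF x]]] show ?thesis by (simp add: Ycupd)
  qed
  define G where "G p x = E x * (\<alpha>$p * c / (c*x$p+d) * u (Y x) + cpartial p u (Y x) / (c*x$p+d)^2)" for p and x :: "complex^'n"
  have dU: "((\<lambda>t. U (cupd x p t)) has_field_derivative G p x) (at (x$p))" if x: "x \<in> D'" for x :: "complex^'n" and p
  proof -
    have "((\<lambda>t. U (cupd x p t)) has_field_derivative
            E x * (\<alpha>$p * c / (c*x$p+d)) * u (Y x) + cpartial p u (Y x) * (1 / (c*x$p+d)^2) * E x) (at (x$p))"
      using DERIV_mult[OF dE[OF x] dUY[OF x]] by (simp add: U_def)
    moreover have "E x * (\<alpha>$p * c / (c*x$p+d)) * u (Y x) + cpartial p u (Y x) * (1 / (c*x$p+d)^2) * E x = G p x"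
      by (simp add: G_def algebra_simps)
    ultimately show ?thesis by simp
  qed
  have cU: "cpartial p U x = G p x" if x: "x \<in> D'" for x :: "complex^'n" and p
    by (rule cpartial_eqI[OF dU[OF x]])
  have dC: "((\<lambda>t. cpartial q u (Y (cupd x p t))) has_field_derivative cpartial p (cpartial q u) (Y x) * (1 / (c*x$p+d)^2)) (at (x$p))"
    if x: "x \<in> D'" and pq: "p \<noteq> q" for x :: "complex^'n" and p q
  proof -
    have "((\<lambda>s. cpartial q u (cupd (Y x) p s)) has_field_derivative cpartial p (cpartial q u) (Y x)) (at (Y x $ p))"
      by (rule second_partial[OF D_dom(1) u_hol YD[OF x] pq])
    then have "((\<lambda>s. cpartial q u (cupd (Y x) p s)) has_field_derivative cpartial p (cpartial q u) (Y x)) (at (m (x $ p)))"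
      by (simp add: Yp)
    from DERIV_chain2[OF this dm[OF nz[OF x]]] show ?thesis by (simp add: Ycupd)
  qed
  define V where "V p q x = E x * (\<alpha>$p * c / (c*x$p+d)) * (\<alpha>$q * c / (c*x$q+d) * u (Y x) + cpartial q u (Y x) / (c*x$q+d)^2)
      + (\<alpha>$q * c / (c*x$q+d) * (cpartial p u (Y x) * (1 / (c*x$p+d)^2)) + cpartial p (cpartial q u) (Y x) * (1 / (c*x$p+d)^2) / (c*x$q+d)^2) * E x"
    for p q and x :: "complex^'n"
  have cUU: "cpartial p (cpartial q U) x = V p q x" if x: "x \<in> D'" and pq: "p \<noteq> q" for x :: "complex^'n" and p q
  proof -
    define H where "H t = E (cupd x p t) * (\<alpha>$q * c / (c*x$q+d) * u (Y (cupd x p t)) + cpartial q u (Y (cupd x p t)) / (c*x$q+d)^2)" for t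
    have dH: "(H has_field_derivative V p q x) (at (x$p))"
      unfolding H_def V_def
      using DERIV_mult[OF dE[OF x] DERIV_add[OF DERIV_cmult[where c="\<alpha>$q * c / (c*x$q+d)", OF dUY[OF x]] DERIV_cdivide[where c="(c*x$q+d)^2", OF dC[OF x pq]]]]
      by simp
    define T where "T = {t. cupd x p t \<in> D'}"
    have T: "open T" "x$p \<in> T" using open_cupd_vimage[OF D'_dom(1)] x by (auto simp: T_def)
    have qp: "q \<noteq> p" using pq by simp
    have "((\<lambda>t. cpartial q U (cupd x p t)) has_field_derivative V p q x) (at (x$p))"
    proof (rule has_field_derivative_transform_within_open[OF dH T])
      fix t assume "t \<in> T"
      then have "cupd x p t \<in> D'" by (simp add: T_def)
      then show "H t = cpartial q U (cupd x p t)"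
        using cU[of "cupd x p t" q] qp by (simp add: H_def G_def)
    qed
    then show ?thesis by (rule cpartial_eqI)
  qed
  show ?thesis
    unfolding U_eq
  proof
    show "cholomorphic_on U D'"
      unfolding cholomorphic_on_def
    proof (rule ballI)
      fix x :: "complex^'n" assume x: "x \<in> D'"
      have "\<forall>k. \<exists>L. (lg k has_derivative L) (at x) \<and> (\<forall>(c::complex) v. L (c *s v) = c * L v)"
        using lg_hol x unfolding cholomorphic_on_def by blast
      then obtain Lk where Lk: "\<And>k. (lg k has_derivative Lk k) (at x)"
        "\<And>k (c::complex) v. Lk k (c *s v) = c * Lk k v"
        by metis
      obtain Lu where Lu: "(u has_derivative Lu) (at (Y x))" "\<And>(c::complex) v. Lu (c *s v) = c * Lu v"
        using u_hol YD[OF x] unfolding cholomorphic_on_def by blast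
      define S where "S y = (\<Sum>k\<in>UNIV. \<alpha>$k * lg k y)" for y
      have dS: "(S has_derivative (\<lambda>h. \<Sum>k\<in>UNIV. \<alpha>$k * Lk k h)) (at x)"
        unfolding S_def by (intro has_derivative_sum has_derivative_mult_right Lk(1))
      have dexp: "(exp has_derivative (\<lambda>h. exp (S x) * h)) (at (S x))"
        using DERIV_exp[of "S x"] unfolding has_field_derivative_def by simp
      have Efun: "E = (\<lambda>y. exp (S y))" by (simp add: fun_eq_iff Eexp S_def)
      have dEx: "(E has_derivative (\<lambda>h. exp (S x) * (\<Sum>k\<in>UNIV. \<alpha>$k * Lk k h))) (at x)"
        unfolding Efun by (rule has_derivative_compose[OF dS dexp])
      have dY: "(Y has_derivative (\<lambda>h. \<chi> k. (1 / (c*x$k+d)^2) * h$k)) (at x)"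
      proof -
        have Yfun: "Y = (\<lambda>y. \<chi> k. m (y$k))" by (simp add: fun_eq_iff Y_def m_def)
        have "((\<lambda>y. m (y$k)) has_derivative (\<lambda>h. (1 / (c*x$k+d)^2) * h$k)) (at x)" for k
        proof -
          have n1: "((\<lambda>y. y$k) has_derivative (\<lambda>h. h$k)) (at x)"
            by (rule bounded_linear.has_derivative[OF bounded_linear_vec_nth has_derivative_ident])
          have n2: "(m has_derivative (\<lambda>h. (1/(c*x$k+d)^2) * h)) (at (x$k))"
            using dm[OF nz[OF x, of k]] unfolding has_field_derivative_def .
          show ?thesis by (rule has_derivative_compose[OF n1 n2])
        qed
        then show ?thesis unfolding Yfun by (rule has_derivative_vec_lambda)
      qed
      have duY: "((\<lambda>y. u (Y y)) has_derivative (\<lambda>h. Lu (\<chi> k. (1 / (c*x$k+d)^2) * h$k))) (at x)"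
        by (rule has_derivative_compose[OF dY Lu(1)])
      have Ufun: "U = (\<lambda>y. E y * u (Y y))" by (simp add: fun_eq_iff U_def)
      have dUx: "(U has_derivative (\<lambda>h. E x * Lu (\<chi> k. (1 / (c*x$k+d)^2) * h$k)
                    + exp (S x) * (\<Sum>k\<in>UNIV. \<alpha>$k * Lk k h) * u (Y x))) (at x)"
        unfolding Ufun by (rule has_derivative_mult[OF dEx duY])
      show "\<exists>L. (U has_derivative L) (at x) \<and> (\<forall>(c::complex) v. L (c *s v) = c * L v)"
      proof (intro exI conjI allI)
        show "(U has_derivative (\<lambda>h. E x * Lu (\<chi> k. (1 / (c*x$k+d)^2) * h$k)
                    + exp (S x) * (\<Sum>k\<in>UNIV. \<alpha>$k * Lk k h) * u (Y x))) (at x)" by (rule dUx)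
        fix z :: complex and v :: "complex^'n"
        have v1: "(\<chi> k. (1 / (c*x$k+d)^2) * (z *s v)$k) = z *s (\<chi> k. (1 / (c*x$k+d)^2) * v$k)"
          by (simp add: vec_eq_iff algebra_simps)
        show "E x * Lu (\<chi> k. (1 / (c*x$k+d)^2) * (z *s v)$k)
                    + exp (S x) * (\<Sum>k\<in>UNIV. \<alpha>$k * Lk k (z *s v)) * u (Y x)
              = z * (E x * Lu (\<chi> k. (1 / (c*x$k+d)^2) * v$k)
                    + exp (S x) * (\<Sum>k\<in>UNIV. \<alpha>$k * Lk k v) * u (Y x))"
          unfolding v1 Lu(2) Lk(2) by (simp add: sum_distrib_left algebra_simps)
      qed
    qed
  next
    show "\<forall>p q. p \<noteq> q \<longrightarrow> (\<forall>x\<in>D'. Mop \<alpha> p q U x = 0)"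
    proof (intro allI impI ballI)
      fix p q :: 'n and x :: "complex^'n" assume pq: "p \<noteq> q" and x: "x \<in> D'"
      have Yk: "Y x $ k = (a*x$k+b)/(c*x$k+d)" for k by (simp add: Y_def)
      have M0: "Mop \<alpha> p q u (Y x) = 0" using u_sol pq YD[OF x] by blast
      have xpq: "x $ p \<noteq> x $ q"
      proof
        assume "x $ p = x $ q"
        then have "Y x $ p = Y x $ q" by (simp add: Y_def)
        moreover have "Y x $ p \<noteq> Y x $ q" using D_sub YD[OF x] pq by blast
        ultimately show False by simp
      qed
      have "Mop \<alpha> p q U x = E x / ((c*x$p+d)^2 * (c*x$q+d)^2) * Mop \<alpha> p q u (Y x)"
        unfolding Mop_def cUU[OF x pq] cU[OF x] V_def G_def Yk
        by (rule alg[OF nz[OF x] nz[OF x] xpq SL2])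
      with M0 show "Mop \<alpha> p q U x = 0" by simp
    qed
  qed
qed

end
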